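(* Let $A,B$ be closed linear relations in $X^2$ such that $\{A,B\}$ is a dual pair with $B^*(0)\cap N(A^* )=\{0\}$ and $A^*(0)\cap N(B^* )=\{0\}$. Then $\dim N(1+B^*A^* )=\dim N(1+A^*B^* )$.
   Context: $X$ is a complex Hilbert space; linear relations are linear subspaces of $X^2=X\times X$. $T^*=\{(f,g):\langle g,x\rangle=\langle f,y\rangle\ \forall(x,y)\in T\}$; $T(0)=\{y:(0,y)\in T\}$; $N(T)=\{x:(x,0)\in T\}$. Closed relations $A,B$ form a dual pair if $A\subset B^*$ (equivalently $B\subset A^*$). Product: $CT=\{(x,z):\exists y,(x,y)\in T,(y,z)\in C\}$; $N(1+B^*A^* )=\{g:(g,-g)\in B^*A^*\}$, and similarly $N(1+A^*B^* )$. *)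

theory Defs
  imports "HOL-Analysis.Analysis" "HOL-Library.Equipollence"
begin

class complex_hilbert = real_normed_vector + complete_space +
  fixes scaleC :: "complex \<Rightarrow> 'a \<Rightarrow> 'a"
    and cinner :: "'a \<Rightarrow> 'a \<Rightarrow> complex"
  assumes scaleC_scaleR: "scaleC (complex_of_real r) x = scaleR r x"
    and scaleC_add_right: "scaleC a (x + y) = scaleC a x + scaleC a y"
    and scaleC_add_left: "scaleC (a + b) x = scaleC a x + scaleC b x"
    and scaleC_scaleC: "scaleC a (scaleC b x) = scaleC (a * b) x"
    and scaleC_one: "scaleC 1 x = x"
    and cinner_add_left: "cinner (x + y) z = cinner x z + cinner y z"
    and cinner_scaleC_left: "cinner (scaleC a x) y = cnj a * cinner x y"
    and cinner_commute: "cinner x y = cnj (cinner y x)"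
    and cinner_norm: "cinner x x = complex_of_real ((norm x)\<^sup>2)"

definition linear_relation :: "('a::complex_hilbert \<times> 'a) set \<Rightarrow> bool" where
  "linear_relation T \<longleftrightarrow> (0, 0) \<in> T \<and>
     (\<forall>p\<in>T. \<forall>q\<in>T. p + q \<in> T) \<and>
     (\<forall>c. \<forall>(x, y)\<in>T. (scaleC c x, scaleC c y) \<in> T)"

definition closed_linear_relation :: "('a::complex_hilbert \<times> 'a) set \<Rightarrow> bool" where
  "closed_linear_relation T \<longleftrightarrow> linear_relation T \<and> closed T"

definition adjoint_rel :: "('a::complex_hilbert \<times> 'a) set \<Rightarrow> ('a \<times> 'a) set" where
  "adjoint_rel T = {(f, g). \<forall>(x, y)\<in>T. cinner g x = cinner f y}"

definition mul_part :: "('a \<times> 'a) set \<Rightarrow> 'a::zero set" where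
  "mul_part T = {y. (0, y) \<in> T}"

definition rel_kernel :: "('a \<times> 'a::zero) set \<Rightarrow> 'a set" where
  "rel_kernel T = {x. (x, 0) \<in> T}"

definition rel_prod :: "('a \<times> 'a) set \<Rightarrow> ('a \<times> 'a) set \<Rightarrow> ('a \<times> 'a) set" where
  "rel_prod C T = {(x, z). \<exists>y. (x, y) \<in> T \<and> (y, z) \<in> C}"

definition one_plus :: "('a::plus \<times> 'a) set \<Rightarrow> ('a \<times> 'a) set" where
  "one_plus T = {(x, x + y) | x y. (x, y) \<in> T}"

definition dual_pair :: "('a::complex_hilbert \<times> 'a) set \<Rightarrow> ('a \<times> 'a) set \<Rightarrow> bool" where
  "dual_pair A B \<longleftrightarrow> closed_linear_relation A \<and> closed_linear_relation B \<and> A \<subseteq> adjoint_rel B"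

definition hamel_basis :: "'a::complex_hilbert set \<Rightarrow> 'a set \<Rightarrow> bool" where
  "hamel_basis M b \<longleftrightarrow> b \<subseteq> M \<and> \<not> module.dependent scaleC b \<and> module.span scaleC b = M"

definition same_dim :: "'a::complex_hilbert set \<Rightarrow> 'a set \<Rightarrow> bool" where
  "same_dim M N \<longleftrightarrow> (\<exists>b1 b2. hamel_basis M b1 \<and> hamel_basis N b2 \<and> b1 \<approx> b2)"

end

theory Submission
  imports Defs
begin

lemma vs_scaleC: "vector_space (scaleC :: complex \<Rightarrow> 'a::complex_hilbert \<Rightarrow> 'a)"
  by unfold_locales (simp_all add: scaleC_add_right scaleC_add_left scaleC_scaleC scaleC_one)

lemma scaleC_neg1: "scaleC (-1) (x::'a::complex_hilbert) = - x"
  using scaleC_scaleR[of "-1" x] by simp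

lemma scaleC_minus_r: "scaleC c (- (x::'a::complex_hilbert)) = - scaleC c x"
proof -
  interpret V: vector_space "scaleC :: complex \<Rightarrow> 'a \<Rightarrow> 'a" by (rule vs_scaleC)
  show ?thesis using V.scale_right_diff_distrib[of c 0 x] by simp
qed

lemma cinner_zero_l: "cinner (0::'a::complex_hilbert) y = 0"
  using cinner_add_left[of "0::'a" 0 y] by simp

lemma cinner_neg_l: "cinner (- (x::'a::complex_hilbert)) y = - cinner x y"
  using cinner_add_left[of x "-x" y] cinner_zero_l[of y] by (simp add: eq_neg_iff_add_eq_0 add.commute)

lemma adj_zero: "(0, 0) \<in> adjoint_rel (T::('a::complex_hilbert \<times> 'a) set)"
  by (auto simp: adjoint_rel_def cinner_zero_l)

lemma adj_add: "(a, b) \<in> adjoint_rel T \<Longrightarrow> (c, d) \<in> adjoint_rel T \<Longrightarrow>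
   (a + c, b + d) \<in> adjoint_rel (T::('a::complex_hilbert \<times> 'a) set)"
  unfolding adjoint_rel_def by (auto simp: cinner_add_left split: prod.splits)

lemma adj_scale: "(a, b) \<in> adjoint_rel T \<Longrightarrow>
   (scaleC c a, scaleC c b) \<in> adjoint_rel (T::('a::complex_hilbert \<times> 'a) set)"
  unfolding adjoint_rel_def by (auto simp: cinner_scaleC_left split: prod.splits)

lemma adj_neg: "(a, b) \<in> adjoint_rel T \<Longrightarrow>
   (- a, - b) \<in> adjoint_rel (T::('a::complex_hilbert \<times> 'a) set)"
  unfolding adjoint_rel_def by (auto simp: cinner_neg_l split: prod.splits)

lemma adj_diff: "(a, b) \<in> adjoint_rel T \<Longrightarrow> (c, d) \<in> adjoint_rel T \<Longrightarrow>
   (a - c, b - d) \<in> adjoint_rel (T::('a::complex_hilbert \<times> 'a) set)"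
  using adj_add[of a b T "-c" "-d"] adj_neg[of c d T] by simp

lemma ker_char: "(x::'a::ab_group_add) \<in> rel_kernel (one_plus (rel_prod C T)) \<longleftrightarrow>
   (\<exists>h. (x, h) \<in> T \<and> (h, - x) \<in> C)"
proof -
  have "(x, 0) \<in> one_plus R \<longleftrightarrow> (x, - x) \<in> R" for R :: "('a \<times> 'a) set"
  proof
    assume "(x, 0) \<in> one_plus R"
    then obtain x' y where "(x, 0) = (x', x' + y)" "(x', y) \<in> R" unfolding one_plus_def by blast
    then have "y = - x" "x' = x" by (auto simp: add_eq_0_iff)
    then show "(x, - x) \<in> R" using \<open>(x', y) \<in> R\<close> by simp
  next
    assume "(x, - x) \<in> R"
    then show "(x, 0) \<in> one_plus R" unfolding one_plus_def by force
  qed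
  then show ?thesis unfolding rel_kernel_def rel_prod_def by simp
qed

theorem lemma2p4:
  fixes A B :: "('a::complex_hilbert \<times> 'a) set"
  assumes "closed_linear_relation A" and "closed_linear_relation B"
    and "dual_pair A B"
    and "mul_part (adjoint_rel B) \<inter> rel_kernel (adjoint_rel A) = {0}"
    and "mul_part (adjoint_rel A) \<inter> rel_kernel (adjoint_rel B) = {0}"
  shows "same_dim (rel_kernel (one_plus (rel_prod (adjoint_rel B) (adjoint_rel A))))
                  (rel_kernel (one_plus (rel_prod (adjoint_rel A) (adjoint_rel B))))"
proof -
  interpret V: vector_space "scaleC :: complex \<Rightarrow> 'a \<Rightarrow> 'a" by (rule vs_scaleC)
  interpret P: vector_space_pair "scaleC :: complex \<Rightarrow> 'a \<Rightarrow> 'a" "scaleC :: complex \<Rightarrow> 'a \<Rightarrow> 'a"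
    by unfold_locales
  define As where "As = adjoint_rel A"
  define Bs where "Bs = adjoint_rel B"
  define N1 where "N1 = rel_kernel (one_plus (rel_prod Bs As))"
  define N2 where "N2 = rel_kernel (one_plus (rel_prod As Bs))"
  have as4: "\<And>x. (0, x) \<in> Bs \<Longrightarrow> (x, 0) \<in> As \<Longrightarrow> x = 0"
    using assms(4) unfolding As_def Bs_def mul_part_def rel_kernel_def by blast
  have as5: "\<And>x. (0, x) \<in> As \<Longrightarrow> (x, 0) \<in> Bs \<Longrightarrow> x = 0"
    using assms(5) unfolding As_def Bs_def mul_part_def rel_kernel_def by blast
  have N1c: "x \<in> N1 \<longleftrightarrow> (\<exists>h. (x, h) \<in> As \<and> (h, - x) \<in> Bs)" for x
    unfolding N1_def by (rule ker_char)
  have N2c: "x \<in> N2 \<longleftrightarrow> (\<exists>h. (x, h) \<in> Bs \<and> (h, - x) \<in> As)" for x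
    unfolding N2_def by (rule ker_char)
  have sub1: "V.subspace N1"
  proof (rule V.subspaceI)
    show "0 \<in> N1" unfolding N1c using adj_zero As_def Bs_def by fastforce
  next
    fix x y assume "x \<in> N1" "y \<in> N1"
    then obtain h k where "(x, h) \<in> As" "(h, - x) \<in> Bs" "(y, k) \<in> As" "(k, - y) \<in> Bs"
      unfolding N1c by blast
    then show "x + y \<in> N1" unfolding N1c As_def Bs_def
      by (intro exI[of _ "h + k"]) (auto dest: adj_add)
  next
    fix c x assume "x \<in> N1"
    then obtain h where "(x, h) \<in> As" "(h, - x) \<in> Bs" unfolding N1c by blast
    then show "scaleC c x \<in> N1" unfolding N1c As_def Bs_def
      by (intro exI[of _ "scaleC c h"]) (auto dest: adj_scale[where c=c] simp: scaleC_minus_r)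
  qed
  obtain b1 where b1: "b1 \<subseteq> N1" "V.independent b1" "N1 \<subseteq> V.span b1" "card b1 = V.dim N1"
    by (rule V.basis_exists)
  have spb1: "V.span b1 = N1" using V.span_subspace[OF b1(1) b1(3) sub1] .
  define phi where "phi g = - (SOME h. (g, h) \<in> As \<and> (h, - g) \<in> Bs)" for g
  define f where "f = P.construct b1 phi"
  have lin: "Vector_Spaces.linear scaleC scaleC f" unfolding f_def by (rule P.linear_construct[OF b1(2)])
  interpret L: Vector_Spaces.linear "scaleC :: complex \<Rightarrow> 'a \<Rightarrow> 'a" "scaleC :: complex \<Rightarrow> 'a \<Rightarrow> 'a" f
    by (rule lin)
  define Q where "Q x \<longleftrightarrow> (x, - f x) \<in> As \<and> (- f x, - x) \<in> Bs" for x
  have Qb: "Q b" if "b \<in> b1" for b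
  proof -
    have "b \<in> N1" using that b1(1) by blast
    then have ex: "\<exists>h. (b, h) \<in> As \<and> (h, - b) \<in> Bs" unfolding N1c .
    have "f b = phi b" unfolding f_def by (rule P.construct_basis[OF b1(2) that])
    then have "- f b = (SOME h. (b, h) \<in> As \<and> (h, - b) \<in> Bs)" by (simp add: phi_def)
    then show ?thesis unfolding Q_def using someI_ex[OF ex] by simp
  qed
  have Qspan: "Q x" if "x \<in> V.span b1" for x
    using that
  proof (induct rule: V.span_induct_alt)
    case base
    then show ?case unfolding Q_def As_def Bs_def by (simp add: adj_zero)
  next
    case (step c x y)
    have qx: "Q x" using Qb step(1) .
    have a1: "(scaleC c x, scaleC c (- f x)) \<in> adjoint_rel A"
      using qx adj_scale unfolding Q_def As_def by blast
    have a2: "(scaleC c (- f x), scaleC c (- x)) \<in> adjoint_rel B"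
      using qx adj_scale unfolding Q_def Bs_def by blast
    have b1': "(y, - f y) \<in> adjoint_rel A" "(- f y, - y) \<in> adjoint_rel B"
      using step(2) unfolding Q_def As_def Bs_def by auto
    have "(scaleC c x + y, scaleC c (- f x) + - f y) \<in> adjoint_rel A"
      by (rule adj_add[OF a1 b1'(1)])
    moreover have "(scaleC c (- f x) + - f y, scaleC c (- x) + - y) \<in> adjoint_rel B"
      by (rule adj_add[OF a2 b1'(2)])
    ultimately show ?case unfolding Q_def As_def Bs_def
      by (simp add: L.add L.scale scaleC_minus_r)
  qed
  have QN1: "Q x" if "x \<in> N1" for x using Qspan that spb1 by blast
  have img: "f ` N1 = N2"
  proof
    show "f ` N1 \<subseteq> N2"
    proof
      fix y assume "y \<in> f ` N1"
      then obtain x where x: "x \<in> N1" "y = f x" by blast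
      have "(f x, x) \<in> Bs" using QN1[OF x(1)] adj_neg[of "- f x" "- x" B] unfolding Q_def Bs_def by simp
      then show "y \<in> N2" unfolding N2c x(2) using QN1[OF x(1)] unfolding Q_def by blast
    qed
  next
    show "N2 \<subseteq> f ` N1"
    proof
      fix h assume "h \<in> N2"
      then obtain g where g: "(h, g) \<in> Bs" "(g, - h) \<in> As" unfolding N2c by blast
      have "(- h, - g) \<in> Bs" using adj_neg[of h g B] g(1) unfolding Bs_def by simp
      then have gN: "g \<in> N1" unfolding N1c using g(2) by blast
      have q: "(g, - f g) \<in> As" "(- f g, - g) \<in> Bs" using QN1[OF gN] unfolding Q_def by auto
      have "(0, h - f g) \<in> As" using adj_diff[OF q(1)[unfolded As_def] g(2)[unfolded As_def]]
        unfolding As_def by simp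
      moreover have "(h - f g, 0) \<in> Bs"
        using adj_diff[OF q(2)[unfolded Bs_def] \<open>(- h, - g) \<in> Bs\<close>[unfolded Bs_def]]
        unfolding Bs_def by simp
      ultimately have "h = f g" using as5 by fastforce
      then show "h \<in> f ` N1" using gN by blast
    qed
  qed
  have inj: "inj_on f N1"
  proof -
    have "\<forall>x\<in>N1. f x = 0 \<longrightarrow> x = 0"
    proof (intro ballI impI)
      fix x assume x: "x \<in> N1" "f x = 0"
      have q: "(x, 0) \<in> As" "(0, - x) \<in> Bs" using QN1[OF x(1)] x(2) unfolding Q_def by auto
      have "(0, x) \<in> Bs" using adj_neg[OF q(2)[unfolded Bs_def]] unfolding Bs_def by simp
      then show "x = 0" using as4 q(1) by blast
    qed
    then show ?thesis using L.inj_on_iff_eq_0[OF sub1] by blast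
  qed
  have ind2: "V.independent (f ` b1)"
    using L.independent_injective_image[OF b1(2)] inj spb1 by simp
  have sp2: "V.span (f ` b1) = N2" using L.span_image[of b1] spb1 img by simp
  have "hamel_basis N1 b1" unfolding hamel_basis_def using b1 spb1 by simp
  moreover have "hamel_basis N2 (f ` b1)" unfolding hamel_basis_def
    using ind2 sp2 img b1(1) by blast
  moreover have "b1 \<approx> f ` b1"
    using inj_on_image_eqpoll_self[OF inj_on_subset[OF inj b1(1)]] eqpoll_sym by blast
  ultimately show ?thesis unfolding same_dim_def N1_def N2_def As_def Bs_def by blast
qed

end
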